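(* Let $X\in\mathbb{R}^{m\times n}_+$, $W\in\mathbb{R}^{m\times r}$, $H\in\mathbb{R}^{r\times n}_+$ with $X=WH$ satisfying the facet-based conditions (FBC) for some parameter $s$, where $d=\operatorname{rank}(X)$. Let $\bar x=\frac1n\sum_{j=1}^n X(:,j)$, $e$ the all-ones vector, and assume $X-\bar x e^\top$ has rank $d-1$ with compact SVD $X-\bar xe^\top=U\Sigma V^\top$, $U\in\mathbb{R}^{m\times(d-1)}$ with orthonormal columns. Let $\tilde X=U^\top(X-\bar xe^\top)\in\mathbb{R}^{(d-1)\times n}$ and $\tilde W=U^\top(W-\bar xe^\top)$ (so $0\in\operatorname{conv}(\tilde X)$, $\operatorname{rank}(\tilde X)=d-1$ and $\tilde X=\tilde WH$). Then the set of vertices of $\operatorname{conv}(\tilde X)^*$ contains all the vertices of $\operatorname{conv}(\tilde W)^*$.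
   Context: For a matrix $M$, $\operatorname{conv}(M)$ denotes the convex hull of its columns. For a set $\mathcal A$ containing the origin in its interior, its dual is $\mathcal A^*=\{y: x^\top y\le 1 \text{ for all } x\in\mathcal A\}$; in particular $\operatorname{conv}(\tilde X)^*=\{\theta:\tilde X^\top\theta\le e\}$. A facet of a polytope is a face of dimension one less than the dimension of the polytope. The unit simplex is $\Delta^r=\{x\in\mathbb{R}^r: x\ge 0,\ \sum_i x_i=1\}$. Facet-based conditions (FBC) with parameter $s$ for $X=WH$, where $d=\operatorname{rank}(X)$: (a) no column of $W$ lies in the convex hull of the other columns of $W$; (b) $H(:,j)\in\Delta^r$ for all $j$; (c) each facet of $\operatorname{conv}(W)$ contains at least $s\ge d$ distinct columns of $X$, and among them at least $d-1$ generate that facet (the convex hull of these $s$ columns has dimension $d-2$); (d) every facet of $\operatorname{conv}(X)$ which is not a facet of $\operatorname{conv}(W)$ contains strictly fewer than $s$ distinct columns of $X$. *)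

theory Defs
  imports "HOL-Analysis.Analysis"
begin

text \<open>Convex hull of the columns of a matrix.\<close>
definition conv_cols :: "real^'n^'m \<Rightarrow> (real^'m) set" where
  "conv_cols M = convex hull (columns M)"

text \<open>Dual (polar) set: A^* = {y. x.y <= 1 for all x in A}.\<close>
definition polar_dual :: "(real^'k) set \<Rightarrow> (real^'k) set" where
  "polar_dual A = {y. \<forall>x\<in>A. x \<bullet> y \<le> 1}"

text \<open>Unit simplex.\<close>
definition unit_simplex :: "(real^'r) set" where
  "unit_simplex = {x. (\<forall>i. 0 \<le> x $ i) \<and> (\<Sum>i\<in>UNIV. x $ i) = 1}"

text \<open>Facet-based conditions (FBC) with parameter s for X = W H, d = rank X.\<close>
definition FBC :: "real^'n^'m \<Rightarrow> real^'r^'m \<Rightarrow> real^'n^'r \<Rightarrow> nat \<Rightarrow> bool" where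
  "FBC X W H s \<longleftrightarrow>
     X = W ** H \<and>
     (\<forall>i. column i W \<notin> convex hull {column k W | k. k \<noteq> i}) \<and>
     (\<forall>j. column j H \<in> unit_simplex) \<and>
     s \<ge> rank X \<and>
     (\<forall>F. F facet_of conv_cols W \<longrightarrow>
          card (F \<inter> columns X) \<ge> s \<and>
          aff_dim (convex hull (F \<inter> columns X)) = int (rank X) - 2) \<and>
     (\<forall>G. G facet_of conv_cols X \<and> \<not> G facet_of conv_cols W \<longrightarrow>
          card (G \<inter> columns X) < s)"

text \<open>Mean column xbar = (1/n) sum_j X(:,j).\<close>
definition mean_col :: "real^'n^'m \<Rightarrow> real^'m" where
  "mean_col X = (1 / real CARD('n)) *\<^sub>R (\<Sum>j\<in>UNIV. column j X)"

text \<open>M - c e^T.\<close>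
definition sub_col :: "real^'n^'m \<Rightarrow> real^'m \<Rightarrow> real^'n^'m" where
  "sub_col M c = (\<chi> i j. M $ i $ j - c $ i)"

end

theory Submission
  imports Defs
begin

declare transpose_matrix_vector[simp del]


lemma column_mult: "column j (A ** B) = A *v column j (B::real^'n^'k)"
  by (simp add: vec_eq_iff column_def matrix_matrix_mult_def matrix_vector_mult_def)

lemma column_sub_col: "column j (sub_col M c) = column j M - c"
  by (simp add: vec_eq_iff column_def sub_col_def)

lemma columns_image: "columns M = (\<lambda>j. column j M) ` UNIV"
  by (auto simp: columns_def)

lemma polar_hull: "polar_dual (convex hull S) = {y. \<forall>x\<in>S. x \<bullet> y \<le> 1}"
proof -
  { fix y assume y: "\<forall>x\<in>S. x \<bullet> y \<le> 1"
    have "S \<subseteq> {x. y \<bullet> x \<le> 1}" using y by (auto simp: inner_commute)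
    hence "convex hull S \<subseteq> {x. y \<bullet> x \<le> 1}"
      by (intro hull_minimal) (auto simp: convex_halfspace_le)
    hence "\<forall>x\<in>convex hull S. x \<bullet> y \<le> 1" by (auto simp: inner_commute) }
  thus ?thesis unfolding polar_dual_def using hull_subset[of S convex] by blast
qed

lemma DIM_k: "DIM(real^'k) = CARD('k)" by simp

lemma span_aff_dim:
  fixes S :: "(real^'k) set"
  assumes "\<forall>y\<in>S. y \<bullet> v = 1"
  shows "span S = UNIV \<longleftrightarrow> aff_dim S = int CARD('k) - 1"
proof -
  have "affine hull S \<subseteq> {y. v \<bullet> y = 1}"
    using assms affine_hyperplane[of v 1] by (intro hull_minimal) (auto simp: inner_commute)
  hence n0: "0 \<notin> affine hull S" by auto
  have "aff_dim (insert 0 S) = aff_dim S + 1" using n0 by (simp add: aff_dim_insert)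
  moreover have "aff_dim (insert 0 S) = int (dim (insert 0 S))"
    by (rule aff_dim_zero) (simp add: hull_inc)
  moreover have "dim (insert 0 S) = dim S"
    by (metis dim_span span_insert_0)
  ultimately have "aff_dim S = int (dim S) - 1" by simp
  thus ?thesis using eucl.dim_eq_full[of S] by simp
qed

lemma extreme_span:
  fixes S :: "(real^'k) set"
  assumes fin: "finite S" and ext: "v extreme_point_of {y. \<forall>x\<in>S. x \<bullet> y \<le> 1}"
  shows "span {x\<in>S. x \<bullet> v = 1} = UNIV"
proof (rule ccontr)
  assume "span {x\<in>S. x \<bullet> v = 1} \<noteq> UNIV"
  from span_not_UNIV_orthogonal[OF this]
  obtain z where zz: "z \<noteq> 0 \<and> (\<forall>x\<in>span {x\<in>S. x \<bullet> v = 1}. z \<bullet> x = 0)" ..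
  note z0 = conjunct1[OF zz] and zo = conjunct2[OF zz]
  have vin: "\<forall>x\<in>S. x \<bullet> v \<le> 1" using ext[unfolded extreme_point_of_def, THEN conjunct1] by simp
  define e where "e x = (if x \<bullet> v = 1 then 1 else (1 - x \<bullet> v) / (\<bar>x \<bullet> z\<bar> + 1))" for x
  have epos: "\<forall>x\<in>S. e x > 0"
  proof
    fix x assume x: "x \<in> S"
    show "e x > 0"
    proof (cases "x \<bullet> v = 1")
      case False
      moreover have "x \<bullet> v \<le> 1" using vin x by blast
      ultimately have "0 < 1 - x \<bullet> v" by linarith
      moreover have "0 < \<bar>x \<bullet> z\<bar> + 1" by simp
      ultimately show ?thesis using False by (simp add: e_def)
    qed (simp add: e_def)
  qed
  define E where "E = Min (insert 1 (e ` S))"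
  have Epos: "E > 0" unfolding E_def using fin epos by auto
  have Ele: "\<forall>x\<in>S. E \<le> e x" unfolding E_def using fin by auto
  have ok: "x \<bullet> (v + t *\<^sub>R z) \<le> 1" if x: "x \<in> S" and t: "\<bar>t\<bar> \<le> E" for x t
  proof (cases "x \<bullet> v = 1")
    case True
    hence "z \<bullet> x = 0" using zo x span_base[of x "{x\<in>S. x \<bullet> v = 1}"] by auto
    thus ?thesis using True by (simp add: inner_add_right inner_commute)
  next
    case False
    let ?g = "1 - x \<bullet> v" and ?a = "\<bar>x \<bullet> z\<bar>"
    have "x \<bullet> v \<le> 1" using vin x by blast
    hence g: "?g > 0" using False by linarith
    have "e x = ?g / (?a + 1)" using False by (simp add: e_def)
    moreover have "E \<le> e x" using Ele x by blast
    ultimately have "\<bar>t\<bar> \<le> ?g / (?a + 1)" using t by linarith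
    hence "\<bar>t\<bar> * (?a + 1) \<le> ?g" by (simp add: pos_le_divide_eq add_pos_nonneg)
    moreover have "\<bar>t\<bar> * ?a \<le> \<bar>t\<bar> * (?a + 1)" by (simp add: mult_left_mono)
    ultimately have "\<bar>t\<bar> * ?a \<le> ?g" by linarith
    moreover have "t * (x \<bullet> z) \<le> \<bar>t\<bar> * ?a" using abs_ge_self[of "t * (x \<bullet> z)"] by (simp add: abs_mult)
    ultimately show ?thesis by (simp add: inner_add_right)
  qed
  have a: "v + E *\<^sub>R z \<in> {y. \<forall>x\<in>S. x \<bullet> y \<le> 1}"
  proof (intro CollectI ballI)
    fix x assume "x \<in> S"
    thus "x \<bullet> (v + E *\<^sub>R z) \<le> 1" using ok[of x E] Epos by simp
  qed
  have b: "v - E *\<^sub>R z \<in> {y. \<forall>x\<in>S. x \<bullet> y \<le> 1}"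
  proof (intro CollectI ballI)
    fix x assume "x \<in> S"
    hence "x \<bullet> (v + (- E) *\<^sub>R z) \<le> 1" using ok[of x "- E"] Epos by simp
    thus "x \<bullet> (v - E *\<^sub>R z) \<le> 1" by simp
  qed
  have ne: "v + E *\<^sub>R z \<noteq> v - E *\<^sub>R z"
  proof
    assume eq: "v + E *\<^sub>R z = v - E *\<^sub>R z"
    have d: "(v + E *\<^sub>R z) - (v - E *\<^sub>R z) = (E + E) *\<^sub>R z"
      by (simp only: scaleR_add_left) (simp add: algebra_simps)
    hence "(v - E *\<^sub>R z) - (v - E *\<^sub>R z) = (E + E) *\<^sub>R z" unfolding eq .
    hence "(E + E) *\<^sub>R z = 0" by (simp only: diff_self eq_commute)
    hence "E + E = 0 \<or> z = 0" by (simp only: scaleR_eq_0_iff)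
    thus False using z0 Epos by auto
  qed
  have "v \<in> open_segment (v + E *\<^sub>R z) (v - E *\<^sub>R z)"
    unfolding in_segment(2) using ne
    by (intro conjI exI[of _ "1/2"]) (simp_all add: algebra_simps flip: scaleR_add_left)
  moreover have "\<forall>a\<in>{y. \<forall>x\<in>S. x \<bullet> y \<le> 1}. \<forall>b\<in>{y. \<forall>x\<in>S. x \<bullet> y \<le> 1}. v \<notin> open_segment a b"
    using ext[unfolded extreme_point_of_def, THEN conjunct2] .
  ultimately show False using a b by blast
qed

lemma extreme_from_span:
  fixes S :: "(real^'k) set"
  assumes vin: "v \<in> {y. \<forall>x\<in>S. x \<bullet> y \<le> 1}" and YS: "Y \<subseteq> S"
    and sp: "span Y = UNIV" and Yv: "\<forall>y\<in>Y. y \<bullet> v = 1"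
  shows "v extreme_point_of {y. \<forall>x\<in>S. x \<bullet> y \<le> 1}"
  unfolding extreme_point_of_def
proof (intro conjI ballI notI)
  show "v \<in> {y. \<forall>x\<in>S. x \<bullet> y \<le> 1}" by fact
  fix a b assume a: "a \<in> {y. \<forall>x\<in>S. x \<bullet> y \<le> 1}" and b: "b \<in> {y. \<forall>x\<in>S. x \<bullet> y \<le> 1}"
    and seg: "v \<in> open_segment a b"
  then obtain u where u: "0 < u" "u < 1" "v = (1 - u) *\<^sub>R a + u *\<^sub>R b" and ab: "a \<noteq> b"
    by (auto simp: in_segment)
  have "\<forall>y\<in>Y. y \<bullet> (a - b) = 0"
  proof
    fix y assume y: "y \<in> Y"
    have h12: "y \<bullet> a \<le> 1" "y \<bullet> b \<le> 1" using a b y YS by auto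
    have h3: "(1 - u) * (y \<bullet> a) + u * (y \<bullet> b) = 1"
      using Yv y u(3) by (simp add: inner_add_right)
    note h = h12 h3
    have ua: "(1 - u) * (y \<bullet> a) \<le> 1 - u"
      using mult_left_mono[of "y \<bullet> a" 1 "1 - u"] h(1) u(2) by simp
    have ub: "u * (y \<bullet> b) \<le> u"
      using mult_left_mono[of "y \<bullet> b" 1 u] h(2) u(1) by simp
    have ya: "y \<bullet> a = 1"
    proof (rule ccontr)
      assume "y \<bullet> a \<noteq> 1"
      hence "y \<bullet> a < 1" using h(1) by simp
      hence "(1 - u) * (y \<bullet> a) < 1 - u" using u(2) mult_strict_left_mono[of "y \<bullet> a" 1 "1 - u"] by simp
      thus False using ub h(3) by linarith
    qed
    have yb: "y \<bullet> b = 1"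
    proof (rule ccontr)
      assume "y \<bullet> b \<noteq> 1"
      hence "y \<bullet> b < 1" using h(2) by simp
      hence "u * (y \<bullet> b) < u" using u(1) mult_strict_left_mono[of "y \<bullet> b" 1 u] by simp
      thus False using ua h(3) by linarith
    qed
    from ya yb show "y \<bullet> (a - b) = 0" by (simp add: inner_diff_right)
  qed
  hence "\<forall>y\<in>span Y. y \<bullet> (a - b) = 0"
    by (metis orthogonal_def orthogonal_to_span inner_commute)
  hence "(a - b) \<bullet> (a - b) = 0" using sp by auto
  thus False using ab by simp
qed

lemma aff_dim_transfer:
  fixes U :: "real^'k^'m" and c :: "real^'m"
  assumes UU: "transpose U ** U = mat 1"
    and Z: "\<forall>p\<in>Z. U *v (transpose U *v (p - c)) = p - c"
  shows "aff_dim ((\<lambda>p. transpose U *v (p - c)) ` Z) = aff_dim Z"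
proof -
  let ?T = "\<lambda>p. transpose U *v (p - c)"
  have inj: "inj ((*v) U)"
  proof (rule injI)
    fix x y assume "U *v x = U *v y"
    hence "transpose U *v (U *v x) = transpose U *v (U *v y)" by simp
    thus "x = y" by (simp add: matrix_vector_mul_assoc UU)
  qed
  have "Z = (+) c ` ((*v) U ` (?T ` Z))"
  proof -
    have "(+) c ` ((*v) U ` (?T ` Z)) = (\<lambda>p. c + U *v ?T p) ` Z" by (simp add: image_image)
    also have "\<dots> = (\<lambda>p. p) ` Z" using Z by (intro image_cong) auto
    finally show ?thesis by simp
  qed
  hence "aff_dim Z = aff_dim ((+) c ` ((*v) U ` (?T ` Z)))" by simp
  also have "\<dots> = aff_dim (?T ` Z)"
    by (simp add: aff_dim_translation_eq inj matrix_vector_mul_linear)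
  finally show ?thesis by simp
qed


theorem lemma2:
  fixes X :: "real^'n^'m" and W :: "real^'r^'m" and H :: "real^'n^'r"
    and s d :: nat
    and U :: "real^'k^'m" and Sigma :: "real^'k^'k" and V :: "real^'k^'n"
  assumes X_nonneg: "\<forall>i j. 0 \<le> X $ i $ j"
    and H_nonneg: "\<forall>i j. 0 \<le> H $ i $ j"
    and fbc: "FBC X W H s"
    and d_def: "d = rank X"
    and rank_centered: "rank (sub_col X (mean_col X)) = d - 1"
    and k_dim: "CARD('k) = d - 1"
    and svd: "sub_col X (mean_col X) = U ** Sigma ** transpose V"
    and U_orth: "transpose U ** U = mat 1"
    and V_orth: "transpose V ** V = mat 1"
    and Sigma_diag: "\<forall>i j. i \<noteq> j \<longrightarrow> Sigma $ i $ j = 0"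
    and Sigma_pos: "\<forall>i. 0 < Sigma $ i $ i"
  shows "{v. v extreme_point_of
              polar_dual (conv_cols (transpose U ** sub_col W (mean_col X)))}
         \<subseteq> {v. v extreme_point_of
              polar_dual (conv_cols (transpose U ** sub_col X (mean_col X)))}"
proof
  fix v
  define c where "c = mean_col X"
  define T where "T p = transpose U *v (p - c)" for p
  define Wt where "Wt = transpose U ** sub_col W c"
  define Xt where "Xt = transpose U ** sub_col X c"
  assume "v \<in> {v. v extreme_point_of
              polar_dual (conv_cols (transpose U ** sub_col W (mean_col X)))}"
  hence vext: "v extreme_point_of polar_dual (conv_cols Wt)" by (simp add: Wt_def c_def)
  from fbc have XWH: "X = W ** H" and simp: "\<forall>j. column j H \<in> unit_simplex"
    and c_facets: "\<forall>F. F facet_of conv_cols W \<longrightarrow> card (F \<inter> columns X) \<ge> s \<and>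
          aff_dim (convex hull (F \<inter> columns X)) = int (rank X) - 2"
    and d_facets: "\<forall>G. G facet_of conv_cols X \<and> \<not> G facet_of conv_cols W \<longrightarrow>
          card (G \<inter> columns X) < s"
    unfolding FBC_def by blast+
  have colWt: "column i Wt = T (column i W)" for i
    by (simp add: Wt_def T_def column_mult column_sub_col)
  have colXt: "column i Xt = T (column i X)" for i
    by (simp add: Xt_def T_def column_mult column_sub_col)
  have colsWt: "columns Wt = T ` columns W"
    by (simp add: columns_image colWt image_image)
  have colsXt: "columns Xt = T ` columns X"
    by (simp add: columns_image colXt image_image)
  have Hsum: "(\<Sum>i\<in>UNIV. H $ i $ j) = 1" and Hnn: "0 \<le> H $ i $ j" for i j
    using simp by (auto simp: unit_simplex_def column_def)
  have Xcol: "column j X = (\<Sum>i\<in>UNIV. H $ i $ j *\<^sub>R column i W)" for j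
  proof -
    have "column j X = W *v column j H" using XWH by (simp add: column_mult)
    also have "\<dots> = (\<Sum>i\<in>UNIV. (column j H $ i) *\<^sub>R column i W)"
      by (simp add: matrix_mult_sum scalar_mult_eq_scaleR)
    finally show ?thesis by (simp add: column_def)
  qed
  have lin: "linear ((*v) (transpose U))" by simp
  have Tlin: "T (\<Sum>i\<in>UNIV. h i *\<^sub>R w i) = (\<Sum>i\<in>UNIV. h i *\<^sub>R T (w i))"
    if "(\<Sum>i\<in>UNIV. h i) = 1" for h :: "'r \<Rightarrow> real" and w
  proof -
    have "(\<Sum>i\<in>UNIV. h i *\<^sub>R w i) - c = (\<Sum>i\<in>UNIV. h i *\<^sub>R (w i - c))"
      using that by (simp add: scaleR_diff_right sum_subtractf flip: scaleR_sum_left)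
    thus ?thesis unfolding T_def by (simp only: linear_sum[OF lin] linear_scale[OF lin])
  qed
  have XtWt: "column j Xt = (\<Sum>i\<in>UNIV. H $ i $ j *\<^sub>R column i Wt)" for j
    using Tlin[OF Hsum] by (simp add: colXt Xcol colWt)
  have convXW: "conv_cols X \<subseteq> conv_cols W"
  proof -
    have "columns X \<subseteq> conv_cols W"
    proof
      fix x assume "x \<in> columns X"
      then obtain j where x: "x = column j X" by (auto simp: columns_def)
      show "x \<in> conv_cols W" unfolding x Xcol conv_cols_def
        by (rule convex_sum) (auto simp: Hsum Hnn columns_def intro: hull_inc)
    qed
    thus ?thesis unfolding conv_cols_def[of X]
      by (intro hull_minimal) (auto simp: conv_cols_def)
  qed
  have convXtWt: "conv_cols Xt \<subseteq> conv_cols Wt"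
  proof -
    have "columns Xt \<subseteq> conv_cols Wt"
    proof
      fix x assume "x \<in> columns Xt"
      then obtain j where x: "x = column j Xt" by (auto simp: columns_def)
      show "x \<in> conv_cols Wt" unfolding x XtWt conv_cols_def
        by (rule convex_sum) (auto simp: Hsum Hnn columns_def intro: hull_inc)
    qed
    thus ?thesis unfolding conv_cols_def[of Xt]
      by (intro hull_minimal) (auto simp: conv_cols_def)
  qed
  have c_in: "c \<in> conv_cols X"
  proof -
    have "c = (\<Sum>j\<in>UNIV. (1 / real CARD('n)) *\<^sub>R column j X)"
      by (simp add: c_def mean_col_def scaleR_sum_right)
    also have "\<dots> \<in> conv_cols X" unfolding conv_cols_def
      by (rule convex_sum) (auto simp: columns_def intro: hull_inc)
    finally show ?thesis .
  qed
  have rangeU: "\<forall>p\<in>affine hull (columns X). U *v (transpose U *v (p - c)) = p - c"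
  proof -
    define A where "A = {p. U *v (transpose U *v (p - c)) = p - c}"
    have affA: "affine A" unfolding affine_def A_def
    proof (intro ballI allI impI, simp only: mem_Collect_eq)
      fix x y :: "real^'m" and u w :: real
      assume x: "U *v (transpose U *v (x - c)) = x - c" and y: "U *v (transpose U *v (y - c)) = y - c"
        and uw: "u + w = 1"
      have e: "u *\<^sub>R x + w *\<^sub>R y - c = u *\<^sub>R (x - c) + w *\<^sub>R (y - c)"
        using uw by (simp add: algebra_simps flip: scaleR_add_left)
      show "U *v (transpose U *v (u *\<^sub>R x + w *\<^sub>R y - c)) = u *\<^sub>R x + w *\<^sub>R y - c"
        unfolding e by (simp add: matrix_vector_right_distrib matrix_vector_mult_scaleR x y)
    qed
    have "columns X \<subseteq> A"
    proof
      fix x assume "x \<in> columns X"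
      then obtain j where x: "x = column j X" by (auto simp: columns_def)
      have "x - c = column j (sub_col X c)" by (simp add: x column_sub_col)
      also have "\<dots> = column j (U ** (Sigma ** transpose V))"
        using svd by (simp add: c_def matrix_mul_assoc)
      also have "\<dots> = U *v column j (Sigma ** transpose V)"
        by (simp only: column_mult)
      finally have xc: "x - c = U *v column j (Sigma ** transpose V)" .
      show "x \<in> A" unfolding A_def
        by (simp add: xc matrix_vector_mul_assoc U_orth flip: matrix_mul_assoc)
    qed
    hence "affine hull (columns X) \<subseteq> A" using affA by (intro hull_minimal) auto
    thus ?thesis by (auto simp: A_def)
  qed
  have kpos: "CARD('k) \<ge> 1" by (simp add: Suc_leI)
  have rk: "int (rank X) - 2 = int CARD('k) - 1" using k_dim d_def kpos by simp
  have affX: "aff_dim (columns X) = int CARD('k)"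
  proof -
    have "c \<in> affine hull (columns X)"
      using c_in convex_hull_subset_affine_hull unfolding conv_cols_def by blast
    hence "aff_dim (columns X) = int (dim ((+) (- c) ` columns X))" by (rule aff_dim_eq_dim)
    also have "(+) (- c) ` columns X = columns (sub_col X c)"
      by (simp add: columns_image column_sub_col image_image)
    also have "dim (columns (sub_col X c)) = CARD('k)"
      using rank_centered k_dim d_def by (simp add: c_def column_rank_def)
    finally show ?thesis .
  qed
  have affcX: "aff_dim (conv_cols X) = int CARD('k)"
    using affX by (simp add: conv_cols_def aff_dim_convex_hull)
  define a where "a = U *v v"
  have Tdot: "T p \<bullet> v = a \<bullet> p - a \<bullet> c" for p
  proof -
    have "T p \<bullet> v = ((p - c) v* U) \<bullet> v" by (simp only: T_def transpose_matrix_vector)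
    also have "\<dots> = (p - c) \<bullet> (U *v v)" by (rule dot_lmul_matrix)
    also have "\<dots> = a \<bullet> p - a \<bullet> c" by (simp add: a_def inner_diff_right inner_commute)
    finally show ?thesis .
  qed
  have PW: "polar_dual (conv_cols Wt) = {y. \<forall>x\<in>columns Wt. x \<bullet> y \<le> 1}"
    by (simp add: conv_cols_def polar_hull)
  have PX: "polar_dual (conv_cols Xt) = {y. \<forall>x\<in>columns Xt. x \<bullet> y \<le> 1}"
    by (simp add: conv_cols_def polar_hull)
  have finWt: "finite (columns Wt)" by (simp add: columns_image)
  have spanQ: "span {x\<in>columns Wt. x \<bullet> v = 1} = UNIV"
    by (rule extreme_span[OF finWt]) (use vext PW in simp)
  have vPW: "\<forall>x\<in>columns Wt. x \<bullet> v \<le> 1" using vext[unfolded extreme_point_of_def, THEN conjunct1] PW by simp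
  have le: "\<forall>p\<in>conv_cols W. a \<bullet> p \<le> 1 + a \<bullet> c"
  proof -
    have "columns W \<subseteq> {p. a \<bullet> p \<le> 1 + a \<bullet> c}"
    proof
      fix p assume "p \<in> columns W"
      hence "T p \<in> columns Wt" using colsWt by auto
      hence "T p \<bullet> v \<le> 1" using vPW by auto
      thus "p \<in> {p. a \<bullet> p \<le> 1 + a \<bullet> c}" by (simp add: Tdot)
    qed
    hence "conv_cols W \<subseteq> {p. a \<bullet> p \<le> 1 + a \<bullet> c}"
      unfolding conv_cols_def by (intro hull_minimal) (auto simp: convex_halfspace_le)
    thus ?thesis by auto
  qed
  define F where "F = conv_cols W \<inter> {p. a \<bullet> p = 1 + a \<bullet> c}"
  have Fface: "F face_of conv_cols W" unfolding F_def
    by (rule face_of_Int_supporting_hyperplane_le) (use le in \<open>auto simp: conv_cols_def\<close>)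
  define Q where "Q = {w \<in> columns W. T w \<bullet> v = 1}"
  have TQ: "T ` Q = {x\<in>columns Wt. x \<bullet> v = 1}" using colsWt by (auto simp: Q_def)
  have QF: "Q \<subseteq> F" by (auto simp: Q_def F_def Tdot conv_cols_def intro: hull_inc)
  have Qne: "Q \<noteq> {}"
  proof
    assume "Q = {}"
    hence e: "{x\<in>columns Wt. x \<bullet> v = 1} = {}" using TQ by simp
    have "span ({} :: (real^'k) set) = UNIV" using spanQ unfolding e .
    hence "(UNIV :: (real^'k) set) = {0}" by (metis span_empty)
    hence "axis (SOME i. True) (1::real) \<in> {0 :: real^'k}" by (metis UNIV_I)
    hence "axis (SOME i. True) (1::real) = (0 :: real^'k)" by simp
    thus False by (simp add: axis_eq_0_iff)
  qed
  have Fne: "F \<noteq> {}" using Qne QF by auto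
  have cW: "c \<in> conv_cols W" using c_in convXW by auto
  have FneW: "F \<noteq> conv_cols W"
  proof
    assume "F = conv_cols W"
    hence "c \<in> F" using cW by simp
    thus False by (simp add: F_def)
  qed
  have polyW: "polyhedron (conv_cols W)"
    unfolding conv_cols_def polytope_def
    by (rule polytope_imp_polyhedron, unfold polytope_def, rule exI[of _ "columns W"]) (simp add: columns_image)
  obtain F' where F': "F' facet_of conv_cols W"
    using face_of_polyhedron_subset_facet[OF polyW Fface Fne FneW] by blast
  define Z' where "Z' = F' \<inter> columns X"
  have Z'aff: "aff_dim (convex hull Z') = int CARD('k) - 1" and Z'card: "card Z' \<ge> s"
    using c_facets F' rk by (auto simp: Z'_def)
  define G where "G = F' \<inter> conv_cols X"
  have F'face: "F' face_of conv_cols W" using F' facet_of_def by blast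
  have convG: "convex G" unfolding G_def
    using face_of_imp_convex[OF F'face] by (simp add: convex_Int conv_cols_def)
  have Gface: "G face_of conv_cols X"
    using F'face convXW convG unfolding face_of_def G_def by (auto simp: conv_cols_def) blast+
  have colsX_conv: "columns X \<subseteq> conv_cols X" by (simp add: conv_cols_def hull_subset)
  have hullZ'G: "convex hull Z' \<subseteq> G"
    using colsX_conv convG by (intro hull_minimal) (auto simp: Z'_def G_def)
  have GX: "G \<noteq> conv_cols X"
  proof
    assume "G = conv_cols X"
    hence "Z' = columns X" using colsX_conv by (auto simp: Z'_def G_def)
    hence "aff_dim (convex hull Z') = int CARD('k)" using affcX by (simp add: conv_cols_def)
    thus False using Z'aff by simp
  qed
  have affG1: "aff_dim G \<ge> int CARD('k) - 1" using aff_dim_subset[OF hullZ'G] Z'aff by simp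
  have affG2: "aff_dim G < int CARD('k)"
    using face_of_aff_dim_lt[OF _ Gface GX] affcX by (simp add: conv_cols_def)
  have Gne: "G \<noteq> {}"
  proof
    assume "G = {}"
    hence "convex hull Z' = {}" using hullZ'G by auto
    thus False using Z'aff kpos by simp
  qed
  have Gfacet: "G facet_of conv_cols X"
    unfolding facet_of_def using Gface Gne affG1 affG2 affcX by simp
  have GZ': "G \<inter> columns X = Z'" using colsX_conv by (auto simp: G_def Z'_def)
  have GW: "G facet_of conv_cols W" using d_facets Gfacet GZ' Z'card by fastforce
  have affW: "aff_dim (conv_cols W) = int CARD('k)"
    using GW affG1 affG2 unfolding facet_of_def by simp
  have hullWX: "affine hull (columns X) = affine hull (columns W)"
  proof (rule affine_dim_equal)
    show "affine hull columns X \<noteq> {}" using c_in convex_hull_subset_affine_hull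
      unfolding conv_cols_def by blast
    have "columns X \<subseteq> affine hull columns W"
      using colsX_conv convXW convex_hull_subset_affine_hull[of "columns W"]
      unfolding conv_cols_def by blast
    thus "affine hull columns X \<subseteq> affine hull columns W"
      by (intro hull_minimal) auto
    show "aff_dim (affine hull columns X) = aff_dim (affine hull columns W)"
      using affX affW by (simp add: conv_cols_def aff_dim_convex_hull)
  qed auto
  have Wrange: "\<forall>p\<in>columns W. U *v (transpose U *v (p - c)) = p - c"
    using rangeU hullWX hull_inc[of _ "columns W" affine] by auto
  have Xrange: "\<forall>p\<in>columns X. U *v (transpose U *v (p - c)) = p - c"
    using rangeU hull_inc[of _ "columns X" affine] by auto
  have affQ: "aff_dim Q = int CARD('k) - 1"
  proof -
    have "aff_dim (T ` Q) = aff_dim Q"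
      unfolding T_def by (rule aff_dim_transfer[OF U_orth]) (use Wrange in \<open>auto simp: Q_def\<close>)
    moreover have "aff_dim (T ` Q) = int CARD('k) - 1"
      using span_aff_dim[of "T ` Q" v] spanQ TQ by auto
    ultimately show ?thesis by simp
  qed
  have affF: "aff_dim F = int CARD('k) - 1"
    using aff_dim_subset[OF QF] affQ face_of_aff_dim_lt[OF _ Fface FneW] affW
    by (simp add: conv_cols_def)
  have Ffacet: "F facet_of conv_cols W"
    unfolding facet_of_def using Fface Fne affF affW by simp
  define Z where "Z = F \<inter> columns X"
  have affZ: "aff_dim Z = int CARD('k) - 1"
    using c_facets Ffacet rk by (simp add: Z_def aff_dim_convex_hull)
  have affTZ: "aff_dim (T ` Z) = int CARD('k) - 1"
  proof -
    have "aff_dim (T ` Z) = aff_dim Z"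
      unfolding T_def by (rule aff_dim_transfer[OF U_orth]) (use Xrange in \<open>auto simp: Z_def\<close>)
    thus ?thesis using affZ by simp
  qed
  have TZv: "\<forall>y\<in>T ` Z. y \<bullet> v = 1" by (auto simp: Z_def F_def Tdot)
  have spanTZ: "span (T ` Z) = UNIV" using span_aff_dim[OF TZv] affTZ by simp
  have TZsub: "T ` Z \<subseteq> columns Xt" using colsXt by (auto simp: Z_def)
  have vPX: "v \<in> {y. \<forall>x\<in>columns Xt. x \<bullet> y \<le> 1}"
  proof -
    have "v \<in> polar_dual (conv_cols Wt)" using vext[unfolded extreme_point_of_def, THEN conjunct1] .
    hence "v \<in> polar_dual (conv_cols Xt)" using convXtWt by (auto simp: polar_dual_def)
    thus ?thesis using PX by simp
  qed
  have "v extreme_point_of polar_dual (conv_cols Xt)"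
    unfolding PX by (rule extreme_from_span[OF vPX TZsub spanTZ TZv])
  thus "v \<in> {v. v extreme_point_of
              polar_dual (conv_cols (transpose U ** sub_col X (mean_col X)))}"
    by (simp add: Xt_def c_def)
qed

end
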